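(* Fix $k\in\mathbb{Z}_{\ge0}$. Let $S$ be a ubiquitously dense subset of $[0,\infty)$ and $R=(r_i)_{i\in\mathbb{Z}_{\ge0}}$ an $S$-gauge system on $\Omega$. Then the function $\tilde\Lambda^k[R]\colon N(\Omega)\times N(\Omega)\to[0,\infty)$ satisfies: (1) $\tilde\Lambda^k[R]\in\mathrm{Met}(N(\Omega))$; (2) the diameter of $N(\Omega)$ with respect to $\tilde\Lambda^k[R]$ is at most $2\cdot2^{-F_k(0)}=2^{-k}$; (3) $\tilde\Lambda^k[R]$ is complete; (4) $\tilde\Lambda^k[R]$ is strongly rigid.
   Context: A subset $S$ of $[0,\infty)$ is ubiquitously dense if $\operatorname{card}(U\cap S)=\operatorname{card}(S)$ for every non-empty open $U\subseteq[0,\infty)$. Fix a bijection $Q\colon\mathbb{Z}_{\ge0}\to\mathbb{Q}_{\ge0}$ with property (M): setting $\mu_m=\min Q^{-1}([m,m+1)\cap\mathbb{Q})$, we have $Q(\mu_m)=m$ and $\mu_m<\mu_{m+1}$ for all $m$. For a summable sequence $\alpha=(a_i)$ of positive reals and $B\subseteq\mathbb{Q}_{\ge0}$, $\langle\alpha,B\rangle=\sum_{i:\,Q(i)\in B}a_i$ ($=0$ if $B=\emptyset$). For $k\in\mathbb{Z}_{\ge0}$ let $F_k(n)=2^n+k$ and $\lambda^k_i=2^{-F_k(i)}$, $\lambda^k=(\lambda^k_i)_{i\ge0}$. $\Omega$ is a discrete space of cardinality $\mathfrak{c}$ and $N(\Omega)=\Omega^{\mathbb{Z}_{\ge0}}$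 with the product topology. For $T\subseteq[0,\infty)$, a $T$-semi-metric on a set $Y$ is a symmetric map $r\colon Y\times Y\to[0,\infty)$ with $r(x,y)=0$ iff $x=y$ and $r(x,y)\in T$ for $x\ne y$; it (or a metric) is strongly rigid if $r(x,y)=r(u,v)\neq0$ implies $\{x,y\}=\{u,v\}$. For dense $S\subseteq[0,\infty)$, an $S$-gauge system on $\Omega$ is a sequence $(r_i)_{i\ge0}$ with each $r_i$ a strongly rigid $(S\cap(i,i+1))$-semi-metric on $\Omega$. Put $J(m,t)=[m,t)\cap\mathbb{Q}$, $\Lambda^k_m[r](a,b)=\langle\lambda^k,J(m,r(a,b))\rangle$ for $a,b\in\Omega$, and for $x=(x_i),y=(y_i)\in N(\Omega)$, $\Lambda^k[R](x,y)=\sum_{m\ge0}\Lambda^k_m[r_m](x_m,y_m)=\langle\lambda^k,\bigsqcup_{m\ge0}J(m,r_m(x_m,y_m))\rangle$. For each $n\in\mathbb{Z}_{\ge0}$ fix an injective map $f_n\colon\Omega^{n+1}\to\Omega$, and define $\Phi\colon N(\Omega)\to N(\Omega)$ by $\Phi(x)_{2n}=x_n$, $\Phi(x)_{2n+1}=f_n(x_0,\dots,x_n)$. Finally $\tilde\Lambda^k[R](x,y)=\Lambda^k[R](\Phi(x),\Phi(y))$. $\mathrm{Met}(Y)$ is the set of metrics on $Y$ generating its topology. *)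

theory Defs
  imports "HOL-Analysis.Analysis" "HOL-Library.Equipollence"
begin

definition ubiq_dense :: "real set \<Rightarrow> bool" where
  "ubiq_dense S \<longleftrightarrow> S \<subseteq> {0..} \<and>
     (\<forall>U. openin (top_of_set {0..}) U \<and> U \<noteq> {} \<longrightarrow> (U \<inter> S) \<approx> S)"

definition mu :: "(nat \<Rightarrow> rat) \<Rightarrow> nat \<Rightarrow> nat" where
  "mu Q m = (LEAST i. of_nat m \<le> Q i \<and> Q i < of_nat m + 1)"

definition admissible_Q :: "(nat \<Rightarrow> rat) \<Rightarrow> bool" where
  "admissible_Q Q \<longleftrightarrow> bij_betw Q UNIV {q. 0 \<le> q} \<and>
     (\<forall>m. Q (mu Q m) = of_nat m \<and> mu Q m < mu Q (Suc m))"

definition bracket :: "(nat \<Rightarrow> rat) \<Rightarrow> (nat \<Rightarrow> real) \<Rightarrow> rat set \<Rightarrow> real" where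
  "bracket Q a B = (\<Sum>i. if Q i \<in> B then a i else 0)"

definition F :: "nat \<Rightarrow> nat \<Rightarrow> nat" where
  "F k n = 2 ^ n + k"

definition lam :: "nat \<Rightarrow> nat \<Rightarrow> real" where
  "lam k i = (1/2) ^ F k i"

definition J :: "nat \<Rightarrow> real \<Rightarrow> rat set" where
  "J m t = {q. real m \<le> real_of_rat q \<and> real_of_rat q < t}"

definition semi_metric_in :: "real set \<Rightarrow> ('a \<Rightarrow> 'a \<Rightarrow> real) \<Rightarrow> bool" where
  "semi_metric_in T r \<longleftrightarrow> (\<forall>x y. r x y = r y x) \<and> (\<forall>x y. r x y = 0 \<longleftrightarrow> x = y)
     \<and> (\<forall>x y. x \<noteq> y \<longrightarrow> r x y \<in> T)"

definition strongly_rigid :: "('a \<Rightarrow> 'a \<Rightarrow> real) \<Rightarrow> bool" where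
  "strongly_rigid r \<longleftrightarrow> (\<forall>x y u v. r x y = r u v \<and> r x y \<noteq> 0 \<longrightarrow> {x, y} = {u, v})"

definition gauge_system :: "real set \<Rightarrow> (nat \<Rightarrow> 'a \<Rightarrow> 'a \<Rightarrow> real) \<Rightarrow> bool" where
  "gauge_system S R \<longleftrightarrow> (\<forall>i. semi_metric_in (S \<inter> {real i<..<real i + 1}) (R i)
                                \<and> strongly_rigid (R i))"

definition Lam :: "nat \<Rightarrow> (nat \<Rightarrow> rat) \<Rightarrow> (nat \<Rightarrow> 'a \<Rightarrow> 'a \<Rightarrow> real)
                     \<Rightarrow> (nat \<Rightarrow> 'a) \<Rightarrow> (nat \<Rightarrow> 'a) \<Rightarrow> real" where
  "Lam k Q R x y = (\<Sum>m. bracket Q (lam k) (J m (R m (x m) (y m))))"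

text \<open>Phi, with f n : Omega^(n+1) -> Omega represented on lists of length n+1.\<close>
definition Phi :: "(nat \<Rightarrow> 'a list \<Rightarrow> 'a) \<Rightarrow> (nat \<Rightarrow> 'a) \<Rightarrow> nat \<Rightarrow> 'a" where
  "Phi f x j = (if even j then x (j div 2) else f (j div 2) (map x [0..<Suc (j div 2)]))"

definition Lam_tilde :: "nat \<Rightarrow> (nat \<Rightarrow> rat) \<Rightarrow> (nat \<Rightarrow> 'a list \<Rightarrow> 'a) \<Rightarrow> (nat \<Rightarrow> 'a \<Rightarrow> 'a \<Rightarrow> real)
                     \<Rightarrow> (nat \<Rightarrow> 'a) \<Rightarrow> (nat \<Rightarrow> 'a) \<Rightarrow> real" where
  "Lam_tilde k Q f R x y = Lam k Q R (Phi f x) (Phi f y)"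

text \<open>N(Omega): countable product of the discrete space Omega (= UNIV of 'a).\<close>
definition baire_top :: "(nat \<Rightarrow> 'a) topology" where
  "baire_top = product_topology (\<lambda>_. discrete_topology (UNIV :: 'a set)) UNIV"

definition Met :: "'b topology \<Rightarrow> ('b \<Rightarrow> 'b \<Rightarrow> real) set" where
  "Met X = {d. Metric_space (topspace X) d \<and> Metric_space.mtopology (topspace X) d = X}"

end

theory Submission
  imports Defs
begin


lemma lam_pos: "0 < lam k i" by (simp add: lam_def)

lemma lam_le_geom: "lam k i \<le> (1/2) ^ i"
proof -
  have "i \<le> 2^i + k" using less_exp[of i] by linarith
  thus ?thesis unfolding lam_def F_def by (intro power_decreasing) auto
qed

lemma lam_summable: "summable (lam k)"
  by (rule summable_comparison_test[where g="\<lambda>i. (1/2)^i"])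
     (auto simp: lam_pos less_imp_le lam_le_geom summable_geometric)

lemma lam_antimono: "i \<le> j \<Longrightarrow> lam k j \<le> lam k i"
  unfolding lam_def F_def by (intro power_decreasing) auto

lemma two_pow_ge: "(2::nat)^j + l \<le> 2^(j+l)"
proof -
  have "l + 1 \<le> (2::nat)^l" using less_exp[of l] by linarith
  have "(2::nat)^j * (l+1) \<le> 2^j * 2^l" using \<open>l + 1 \<le> 2^l\<close> by (rule mult_le_mono2)
  moreover have "(2::nat)^j + l \<le> 2^j * (l+1)" 
  proof -
    have "l \<le> 2^j * l" by simp
    thus ?thesis by (simp add: algebra_simps)
  qed
  ultimately have "(2::nat)^j + l \<le> 2^j * 2^l" by (meson order_trans)
  thus ?thesis by (simp add: power_add)
qed

lemma lam_shift: "lam k (j + l) \<le> lam k j * (1/2)^l"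
proof -
  have "lam k j * (1/2)^l = (1/2)^(2^j + k + l)" by (simp add: lam_def F_def power_add)
  moreover have "lam k (j+l) \<le> (1/2)^(2^j + k + l)"
    unfolding lam_def F_def using two_pow_ge[of j l] by (intro power_decreasing) auto
  ultimately show ?thesis by simp
qed

lemma lam_shift2: "lam k (j + 2) < lam k j * (1/2)^2"
proof -
  have "lam k j * (1/2)^2 = (1/2)^(2^j + k + 2)" by (simp only: lam_def F_def power_add)
  moreover have "(2::nat)^j + k + 2 < 2^(j+2) + k" 
  proof -
    have "(1::nat) \<le> 2^j" by simp
    hence "2 < 3 * (2::nat)^j" by linarith
    thus ?thesis by (simp add: power_add)
  qed
  hence "lam k (j+2) < (1/2)^(2^j + k + 2)"
    unfolding lam_def F_def by (intro power_strict_decreasing) auto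
  ultimately show ?thesis by simp
qed

definition wt :: "nat \<Rightarrow> nat set \<Rightarrow> real" where
  "wt k A = (\<Sum>i. if i \<in> A then lam k i else 0)"

lemma wt_summable: "summable (\<lambda>i. if i \<in> A then lam k i else 0)"
  by (rule summable_comparison_test[OF _ lam_summable[of k]]) (auto simp: lam_pos less_imp_le)

lemma wt_sums: "(\<lambda>i. if i \<in> A then lam k i else 0) sums wt k A"
  unfolding wt_def using wt_summable by (simp add: summable_sums)

lemma wt_nonneg: "0 \<le> wt k A"
  unfolding wt_def by (rule suminf_nonneg[OF wt_summable]) (auto simp: lam_pos less_imp_le)

lemma wt_mono: "A \<subseteq> B \<Longrightarrow> wt k A \<le> wt k B"
  unfolding wt_def by (rule suminf_le[OF _ wt_summable wt_summable]) (auto simp: lam_pos less_imp_le)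

lemma wt_empty[simp]: "wt k {} = 0" unfolding wt_def by simp

lemma wt_Un: "A \<inter> B = {} \<Longrightarrow> wt k (A \<union> B) = wt k A + wt k B"
proof -
  assume d: "A \<inter> B = {}"
  have "(\<lambda>i. if i \<in> A \<union> B then lam k i else 0) = (\<lambda>i. (if i \<in> A then lam k i else 0) + (if i \<in> B then lam k i else 0))"
    using d by (auto intro!: ext)
  thus ?thesis unfolding wt_def by (simp add: suminf_add[OF wt_summable wt_summable])
qed

lemma wt_single: "wt k {j} = lam k j"
proof -
  have "(\<lambda>i. if i \<in> {j} then lam k i else 0) sums lam k j"
    using sums_single[of j "lam k"] by (simp add: if_distrib cong: if_cong)
  thus ?thesis unfolding wt_def by (simp add: sums_iff)
qed

lemma wt_tail: "wt k {j<..} < lam k j"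
proof -
  let ?h = "\<lambda>i. if i \<in> {j<..} then lam k i else 0"
  have "wt k {j<..} = (\<Sum>l. ?h (l + Suc j)) + (\<Sum>i<Suc j. ?h i)"
    unfolding wt_def by (rule suminf_split_initial_segment[OF wt_summable])
  also have "(\<Sum>i<Suc j. ?h i) = 0" by simp
  also have "(\<lambda>l. ?h (l + Suc j)) = (\<lambda>l. lam k (j + Suc l))" by (auto intro!: ext simp: add.commute)
  finally have e: "wt k {j<..} = (\<Sum>l. lam k (j + Suc l))" by simp
  let ?g = "\<lambda>l. lam k j * (1/2) * (1/2)^l"
  have sg: "summable ?g" by (intro summable_mult summable_geometric) auto
  have "(\<Sum>l. ?g l) = lam k j * (1/2) * (\<Sum>l. (1/2::real)^l)" 
    by (rule suminf_mult[OF summable_geometric]) simp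
  hence gv: "(\<Sum>l. ?g l) = lam k j" by (simp add: suminf_geometric)
  have sl: "summable (\<lambda>l. lam k (j + Suc l))"
    using lam_summable[of k] summable_iff_shift[of "lam k" "Suc j"] by (simp add: add.commute)
  have le: "lam k (j + Suc l) \<le> ?g l" for l using lam_shift[of k j "Suc l"] by simp
  have lt: "lam k (j + Suc 1) < ?g 1" using lam_shift2[of k j] by (simp add: power2_eq_square)
  have "0 < (\<Sum>l. ?g l - lam k (j + Suc l))"
    apply (rule suminf_pos2[where i=1])
    using sg sl le lt by (auto intro: summable_diff)
  also have "\<dots> = (\<Sum>l. ?g l) - (\<Sum>l. lam k (j + Suc l))" by (rule suminf_diff[OF sg sl, symmetric])
  finally show ?thesis using e gv by simp
qed

lemma wt_atLeast: "wt k {j..} \<le> 2 * lam k j"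
proof -
  have "{j..} = {j} \<union> {j<..}" by auto
  hence "wt k {j..} = lam k j + wt k {j<..}" by (metis wt_Un wt_single Int_insert_left_if0 greaterThan_iff less_irrefl inf_bot_left)
  thus ?thesis using wt_tail[of k j] by simp
qed

lemma wt_less_aux:
  assumes "j \<in> A" "j \<notin> B" "\<And>i. i < j \<Longrightarrow> (i \<in> A) = (i \<in> B)"
  shows "wt k B < wt k A"
proof -
  define C where "C = A \<inter> {..<j}"
  have C2: "C = B \<inter> {..<j}" using assms(3) unfolding C_def by auto
  have "C \<union> {j} \<subseteq> A" using assms(1) C_def by auto
  hence "wt k (C \<union> {j}) \<le> wt k A" by (rule wt_mono)
  moreover have "wt k (C \<union> {j}) = wt k C + lam k j" by (subst wt_Un) (auto simp: C_def wt_single)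
  moreover have "B = C \<union> (B \<inter> {j<..})" using C2 assms(2) by (auto simp: not_less_iff_gr_or_eq)
  hence "wt k B = wt k C + wt k (B \<inter> {j<..})" by (metis C2 wt_Un Int_assoc Int_commute Int_empty_right  greaterThan_iff lessThan_iff disjoint_iff order.asym)
  moreover have "wt k (B \<inter> {j<..}) \<le> wt k {j<..}" by (rule wt_mono) auto
  ultimately show ?thesis using wt_tail[of k j] by linarith
qed

lemma wt_inj: "wt k A = wt k B \<Longrightarrow> A = B"
proof (rule ccontr)
  assume e: "wt k A = wt k B" and ne: "A \<noteq> B"
  then obtain i where "(i \<in> A) \<noteq> (i \<in> B)" by blast
  define j where "j = (LEAST i. (i \<in> A) \<noteq> (i \<in> B))"
  have j: "(j \<in> A) \<noteq> (j \<in> B)" unfolding j_def by (rule LeastI) fact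
  have lt: "\<And>i. i < j \<Longrightarrow> (i \<in> A) = (i \<in> B)" unfolding j_def using not_less_Least by blast
  show False
  proof (cases "j \<in> A")
    case True
    then show ?thesis using wt_less_aux[of j A B k] j lt e by auto
  next
    case False
    then show ?thesis using wt_less_aux[of j B A k] j lt e by auto
  qed
qed

lemma wt_has_sum: "(lam k has_sum wt k A) A"
proof -
  have "((\<lambda>i. if i \<in> A then lam k i else 0) has_sum wt k A) UNIV"
    by (rule sums_nonneg_imp_has_sum[OF wt_sums]) (auto simp: lam_pos less_imp_le)
  moreover have "((\<lambda>i. if i \<in> A then lam k i else 0) has_sum wt k A) UNIV \<longleftrightarrow> (lam k has_sum wt k A) A"
    by (rule has_sum_cong_neutral) auto
  ultimately show ?thesis by simp
qed

lemma wt_UN: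
  assumes d: "disjoint_family A"
  shows "(\<lambda>m. wt k (A m)) sums wt k (\<Union>m. A m)"
proof -
  have bij: "bij_betw snd (Sigma UNIV A) (\<Union>m. A m)"
    unfolding bij_betw_def inj_on_def using d by (auto simp: disjoint_family_on_def image_iff Bex_def)
  have "((\<lambda>x. lam k (snd x)) has_sum wt k (\<Union>m. A m)) (Sigma UNIV A)"
    using has_sum_reindex_bij_betw[OF bij] wt_has_sum by blast
  hence "((\<lambda>m. wt k (A m)) has_sum wt k (\<Union>m. A m)) UNIV"
    by (rule has_sum_Sigma') (simp add: wt_has_sum)
  thus ?thesis by (rule has_sum_imp_sums)
qed



lemma real_le_rat_iff: "real m \<le> real_of_rat q \<longleftrightarrow> of_nat m \<le> q"
proof -
  have "real m = of_rat (of_nat m)" by simp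
  thus ?thesis by (simp only: of_rat_less_eq)
qed
lemma rat_less_real_iff: "real_of_rat q < real m + 1 \<longleftrightarrow> q < of_nat m + 1"
proof -
  have "real m + 1 = of_rat (of_nat m + 1)" by (simp add: of_rat_add)
  thus ?thesis by (simp only: of_rat_less)
qed

lemma bracket_wt: "bracket Q (lam k) B = wt k {i. Q i \<in> B}"
  unfolding bracket_def wt_def by simp

locale setting =
  fixes k :: nat and Q :: "nat \<Rightarrow> rat" and S :: "real set" and R :: "nat \<Rightarrow> 'w \<Rightarrow> 'w \<Rightarrow> real"
  assumes Q: "admissible_Q Q" and R: "gauge_system S R"
begin

lemma Qbij: "bij_betw Q UNIV {q. 0 \<le> q}" using Q by (simp add: admissible_Q_def)
lemma Qmu: "Q (mu Q m) = of_nat m" using Q by (simp add: admissible_Q_def)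
lemma mu_Suc: "mu Q m < mu Q (Suc m)" using Q by (simp add: admissible_Q_def)

lemma mu_mono: "m \<le> n \<Longrightarrow> mu Q m \<le> mu Q n"
proof (induction n rule: dec_induct)
  case base then show ?case by simp
next
  case (step n) then show ?case using mu_Suc[of n] by linarith
qed

lemma mu_ge: "m \<le> mu Q m"
proof (induction m)
  case 0 then show ?case by simp
next
  case (Suc m) then show ?case using mu_Suc[of m] by linarith
qed

lemma mu_least: "of_nat m \<le> Q i \<Longrightarrow> Q i < of_nat m + 1 \<Longrightarrow> mu Q m \<le> i"
  unfolding mu_def by (rule Least_le) simp

lemma Rsym: "R m a b = R m b a" and Rzero: "R m a b = 0 \<longleftrightarrow> a = b"
  and Rrange: "a \<noteq> b \<Longrightarrow> real m < R m a b \<and> R m a b < real m + 1"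
  and Rrig: "strongly_rigid (R m)"
  using R unfolding gauge_system_def semi_metric_in_def by simp_all

definition Aset :: "nat \<Rightarrow> 'w \<Rightarrow> 'w \<Rightarrow> nat set" where
  "Aset m a b = {i. Q i \<in> J m (R m a b)}"

definition Blk :: "nat \<Rightarrow> nat set" where
  "Blk m = {i. of_nat m \<le> Q i \<and> Q i < of_nat m + 1}"

lemma Aset_sym: "Aset m a b = Aset m b a" unfolding Aset_def using Rsym by simp

lemma Aset_same: "Aset m a a = {}"
  unfolding Aset_def J_def using Rzero[of m a a] by (auto simp: real_le_rat_iff)

lemma R_le: "R m a b < real m + 1"
  using Rrange[of a b m] Rzero[of m a b] by (cases "a = b") auto

lemma Aset_Blk: "Aset m a b \<subseteq> Blk m"
proof
  fix i assume "i \<in> Aset m a b"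
  hence "real m \<le> real_of_rat (Q i)" "real_of_rat (Q i) < real m + 1"
    using R_le[of m a b] unfolding Aset_def J_def by auto
  thus "i \<in> Blk m" unfolding Blk_def by (simp add: real_le_rat_iff rat_less_real_iff)
qed

lemma Blk_ge: "Blk m \<subseteq> {mu Q m..}" unfolding Blk_def using mu_least by auto

lemma Blk_disj: "m \<noteq> n \<Longrightarrow> Blk m \<inter> Blk n = {}"
proof (rule ccontr)
  assume "m \<noteq> n" "Blk m \<inter> Blk n \<noteq> {}"
  then obtain i where "of_nat m \<le> Q i" "Q i < of_nat m + 1" "of_nat n \<le> Q i" "Q i < of_nat n + 1"
    unfolding Blk_def by auto
  hence "(of_nat m :: rat) < of_nat n + 1" "(of_nat n :: rat) < of_nat m + 1" by auto
  hence "m < n + 1" "n < m + 1" by (metis of_nat_less_iff of_nat_Suc add.commute Suc_eq_plus1)+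
  thus False using \<open>m \<noteq> n\<close> by linarith
qed

lemma mu_in_Aset: "a \<noteq> b \<Longrightarrow> mu Q m \<in> Aset m a b"
  unfolding Aset_def J_def using Rrange[of a b m] by (simp add: Qmu)

abbreviation "D m a b \<equiv> wt k (Aset m a b)"

lemma D_eq: "bracket Q (lam k) (J m (R m a b)) = D m a b"
  by (simp add: bracket_wt Aset_def)

lemma D_lower: "a \<noteq> b \<Longrightarrow> lam k (mu Q m) \<le> D m a b"
  using wt_mono[of "{mu Q m}" "Aset m a b" k] mu_in_Aset by (auto simp: wt_single)

lemma D_upper: "D m a b \<le> 2 * lam k (mu Q m)"
  using wt_mono[OF order.trans[OF Aset_Blk Blk_ge], of k m a b] wt_atLeast[of k "mu Q m"] by linarith

lemma D_upper2: "D m a b \<le> 2 * lam k m"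
  using D_upper[of m a b] lam_antimono[OF mu_ge, of k m] by linarith

lemma D_tri: "D m a c \<le> D m a b + D m b c"
proof (cases "a = b \<or> b = c")
  case True thus ?thesis using Aset_same wt_nonneg by auto
next
  case False
  thus ?thesis using D_lower[of a b m] D_lower[of b c m] D_upper[of m a c] by linarith
qed

definition UU :: "(nat \<Rightarrow> 'w) \<Rightarrow> (nat \<Rightarrow> 'w) \<Rightarrow> nat set" where
  "UU X Y = (\<Union>m. Aset m (X m) (Y m))"

lemma disj: "disjoint_family (\<lambda>m. Aset m (X m) (Y m))"
  unfolding disjoint_family_on_def using Aset_Blk Blk_disj by blast

lemma Lam_sums: "(\<lambda>m. D m (X m) (Y m)) sums Lam k Q R X Y"
proof -
  have "(\<lambda>m. D m (X m) (Y m)) sums wt k (UU X Y)" unfolding UU_def by (rule wt_UN[OF disj])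
  moreover have "Lam k Q R X Y = (\<Sum>m. D m (X m) (Y m))" unfolding Lam_def by (simp add: D_eq)
  ultimately show ?thesis by (simp add: sums_iff)
qed

lemma Lam_UU: "Lam k Q R X Y = wt k (UU X Y)"
  using Lam_sums[of X Y] wt_UN[OF disj, of k X Y] unfolding UU_def by (simp add: sums_unique2)

lemma Lam_nonneg: "0 \<le> Lam k Q R X Y" by (simp add: Lam_UU wt_nonneg)
lemma Lam_sym: "Lam k Q R X Y = Lam k Q R Y X" by (simp add: Lam_UU UU_def Aset_sym)
lemma Lam_same: "Lam k Q R X X = 0" by (simp add: Lam_UU UU_def Aset_same)

lemma Lam_ge: "X m \<noteq> Y m \<Longrightarrow> lam k (mu Q m) \<le> Lam k Q R X Y"
  unfolding Lam_UU using wt_mono[of "{mu Q m}" "UU X Y" k] mu_in_Aset[of "X m" "Y m" m]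
  by (auto simp: wt_single UU_def)

lemma Lam_zero: "Lam k Q R X Y = 0 \<Longrightarrow> X = Y"
proof (rule ccontr)
  assume "Lam k Q R X Y = 0" "X \<noteq> Y"
  then obtain m where "X m \<noteq> Y m" by auto
  hence "lam k (mu Q m) \<le> Lam k Q R X Y" by (rule Lam_ge)
  thus False using lam_pos[of k "mu Q m"] \<open>Lam k Q R X Y = 0\<close> by linarith
qed

lemma Lam_tri: "Lam k Q R X Z \<le> Lam k Q R X Y + Lam k Q R Y Z"
  by (rule sums_le[OF _ Lam_sums sums_add[OF Lam_sums Lam_sums]]) (rule D_tri)

lemma Lam_bound: "Lam k Q R X Y \<le> 2 * (1/2) ^ F k 0"
proof -
  have "Lam k Q R X Y \<le> wt k {0..}" unfolding Lam_UU by (rule wt_mono) auto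
  also have "\<dots> \<le> 2 * lam k 0" by (rule wt_atLeast)
  finally show ?thesis by (simp add: lam_def)
qed

lemma Aset_of_UU: "Aset m (X m) (Y m) = UU X Y \<inter> Blk m"
proof
  show "Aset m (X m) (Y m) \<subseteq> UU X Y \<inter> Blk m" using Aset_Blk unfolding UU_def by blast
next
  show "UU X Y \<inter> Blk m \<subseteq> Aset m (X m) (Y m)"
  proof
    fix i assume "i \<in> UU X Y \<inter> Blk m"
    then obtain n where n: "i \<in> Aset n (X n) (Y n)" "i \<in> Blk m" unfolding UU_def by auto
    hence "i \<in> Blk n" using Aset_Blk by blast
    hence "n = m" using n(2) Blk_disj[of n m] by blast
    thus "i \<in> Aset m (X m) (Y m)" using n by simp
  qed
qed

lemma J_inj:
  assumes t1: "t1 = 0 \<or> real m < t1" and t2: "t2 = 0 \<or> real m < t2" and e: "J m t1 = J m t2"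
  shows "t1 = t2"
proof (rule ccontr)
  assume "t1 \<noteq> t2"
  have main: "False" if "s1 < s2" "s1 = 0 \<or> real m < s1" "s2 = 0 \<or> real m < s2" "J m s1 = J m s2" for s1 s2
  proof -
    have "real m < s2" using that by auto
    have "max s1 (real m) < s2" using that \<open>real m < s2\<close> by auto
    then obtain q where q: "max s1 (real m) < of_rat q" "of_rat q < s2" using of_rat_dense by blast
    hence "q \<in> J m s2" "q \<notin> J m s1" unfolding J_def by auto
    thus False using that by auto
  qed
  show False
  proof (cases "t1 < t2")
    case True thus ?thesis using main t1 t2 e by blast
  next
    case False thus ?thesis using main[of t2 t1] t1 t2 e \<open>t1 \<noteq> t2\<close> by auto
  qed
qed

lemma R_cases: "R m a b = 0 \<or> real m < R m a b"
  using Rrange[of a b m] Rzero[of m a b] by (cases "a = b") auto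

lemma J_nonneg: "q \<in> J m t \<Longrightarrow> 0 \<le> q"
  unfolding J_def by auto (metis of_nat_0_le_iff of_rat_less_eq of_rat_of_nat_eq order.trans zero_le_of_rat_iff)

lemma Lam_rigid:
  assumes "Lam k Q R X Y = Lam k Q R U V"
  shows "R m (X m) (Y m) = R m (U m) (V m)"
proof -
  have "UU X Y = UU U V" using assms by (simp add: Lam_UU wt_inj)
  hence "Aset m (X m) (Y m) = Aset m (U m) (V m)" by (simp add: Aset_of_UU)
  hence e: "Q -` J m (R m (X m) (Y m)) = Q -` J m (R m (U m) (V m))" unfolding Aset_def by auto
  have "J m (R m (X m) (Y m)) = J m (R m (U m) (V m))"
  proof -
    have "surj_on": "J m t \<subseteq> range Q" for t using Qbij J_nonneg unfolding bij_betw_def by blast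
    show ?thesis using e surj_on by blast
  qed
  thus ?thesis using J_inj R_cases by blast
qed

end


lemma metric_baire:
  fixes d :: "(nat \<Rightarrow> 'a) \<Rightarrow> (nat \<Rightarrow> 'a) \<Rightarrow> real"
  assumes ms: "Metric_space UNIV d"
    and close: "\<And>e. e > 0 \<Longrightarrow> \<exists>N. \<forall>x y. (\<forall>i<N. x i = y i) \<longrightarrow> d x y < e"
    and sep: "\<And>N. \<exists>r>0. \<forall>x y. d x y < r \<longrightarrow> (\<forall>i<N. x i = y i)"
  shows "Metric_space.mtopology UNIV d = (baire_top :: (nat \<Rightarrow> 'a) topology)
         \<and> Metric_space.mcomplete UNIV d"
proof -
  interpret Metric_space UNIV d by (rule ms)
  have ob: "openin baire_top S \<longleftrightarrow> (\<forall>x\<in>S. \<exists>U. finite {i. U i \<noteq> UNIV} \<and> x \<in> Pi UNIV U \<and> Pi UNIV U \<subseteq> S)"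
    for S :: "(nat \<Rightarrow> 'a) set"
    unfolding baire_top_def openin_product_topology_alt by (simp add: PiE_UNIV_domain)
  have top: "mtopology = baire_top"
    unfolding topology_eq
  proof (intro allI iffI)
    fix S :: "(nat \<Rightarrow> 'a) set" assume "openin mtopology S"
    hence H: "\<And>x. x \<in> S \<Longrightarrow> \<exists>r>0. mball x r \<subseteq> S" unfolding openin_mtopology by blast
    show "openin baire_top S" unfolding ob
    proof
      fix x assume "x \<in> S"
      then obtain r where r: "r > 0" "mball x r \<subseteq> S" using H by blast
      obtain N where N: "\<And>x y. (\<forall>i<N. x i = y i) \<Longrightarrow> d x y < r" using close[OF r(1)] by blast
      define U where "U i = (if i < N then {x i} else UNIV)" for i
      have "finite {i. U i \<noteq> UNIV}" by (rule finite_subset[of _ "{..<N}"]) (auto simp: U_def)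
      moreover have "x \<in> Pi UNIV U" by (auto simp: U_def)
      moreover have "Pi UNIV U \<subseteq> S"
      proof
        fix y assume "y \<in> Pi UNIV U"
        hence "\<forall>i<N. x i = y i" unfolding U_def Pi_def by (metis (mono_tags, lifting) UNIV_I mem_Collect_eq singletonD)
        hence "d x y < r" by (rule N)
        thus "y \<in> S" using r(2) by auto
      qed
      ultimately show "\<exists>U. finite {i. U i \<noteq> UNIV} \<and> x \<in> Pi UNIV U \<and> Pi UNIV U \<subseteq> S" by blast
    qed
  next
    fix S :: "(nat \<Rightarrow> 'a) set" assume "openin baire_top S"
    hence H: "\<And>x. x \<in> S \<Longrightarrow> \<exists>U. finite {i. U i \<noteq> UNIV} \<and> x \<in> Pi UNIV U \<and> Pi UNIV U \<subseteq> S"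
      using ob[of S] by blast
    show "openin mtopology S" unfolding openin_mtopology
    proof (intro conjI allI impI)
      fix x assume "x \<in> S"
      then obtain U where U: "finite {i. U i \<noteq> UNIV}" "x \<in> Pi UNIV U" "Pi UNIV U \<subseteq> S" using H by blast
      obtain N where N: "{i. U i \<noteq> UNIV} \<subseteq> {..<N}" using finite_nat_bounded[OF U(1)] by blast
      obtain r where r: "r > 0" "\<And>x y. d x y < r \<Longrightarrow> (\<forall>i<N. x i = y i)" using sep[of N] by blast
      have "mball x r \<subseteq> S"
      proof
        fix y assume "y \<in> mball x r"
        hence a: "\<forall>i<N. x i = y i" using r(2) by auto
        have "y \<in> Pi UNIV U"
        proof (unfold Pi_iff, intro ballI)
          fix i
          show "y i \<in> U i"
          proof (cases "i < N")
            case True thus ?thesis using a U(2) by (metis Pi_mem UNIV_I)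
          next
            case False thus ?thesis using N by auto
          qed
        qed
        thus "y \<in> S" using U(3) by blast
      qed
      thus "\<exists>r>0. mball x r \<subseteq> S" using r(1) by blast
    qed auto
  qed
  have comp: "mcomplete"
    unfolding mcomplete_def
  proof (intro allI impI)
    fix \<sigma> :: "nat \<Rightarrow> nat \<Rightarrow> 'a" assume c: "MCauchy \<sigma>"
    have "\<forall>n. \<exists>P. \<forall>p q. P \<le> p \<longrightarrow> P \<le> q \<longrightarrow> (\<forall>i<n. \<sigma> p i = \<sigma> q i)"
    proof
      fix n
      obtain r where r: "r > 0" "\<And>x y. d x y < r \<Longrightarrow> (\<forall>i<n. x i = y i)" using sep[of n] by blast
      obtain P where "\<forall>p q. P \<le> p \<longrightarrow> P \<le> q \<longrightarrow> d (\<sigma> p) (\<sigma> q) < r"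
        using c r(1) unfolding MCauchy_def by blast
      thus "\<exists>P. \<forall>p q. P \<le> p \<longrightarrow> P \<le> q \<longrightarrow> (\<forall>i<n. \<sigma> p i = \<sigma> q i)" using r(2) by blast
    qed
    then obtain P where P: "\<And>n p q i. P n \<le> p \<Longrightarrow> P n \<le> q \<Longrightarrow> i < n \<Longrightarrow> \<sigma> p i = \<sigma> q i"
      by metis
    define l where "l i = \<sigma> (P (Suc i)) i" for i
    have lim: "\<sigma> p i = l i" if "P (Suc i) \<le> p" for p i
      unfolding l_def using P[of "Suc i" p "P (Suc i)" i] that by simp
    have "limitin mtopology \<sigma> l sequentially"
      unfolding limitin_metric
    proof (intro conjI allI impI)
      fix e :: real assume "e > 0"
      then obtain M where M: "\<And>x y. (\<forall>i<M. x i = y i) \<Longrightarrow> d x y < e" using close by blast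
      define B where "B = Max (P ` {..M})"
      have "d (\<sigma> p) l < e" if "B \<le> p" for p
      proof -
        have "\<forall>i<M. \<sigma> p i = l i"
        proof (intro allI impI)
          fix i assume "i < M"
          hence "P (Suc i) \<le> B" unfolding B_def by (intro Max_ge) auto
          thus "\<sigma> p i = l i" using lim that by simp
        qed
        thus ?thesis by (rule M)
      qed
      thus "\<forall>\<^sub>F x in sequentially. \<sigma> x \<in> UNIV \<and> d (\<sigma> x) l < e"
        unfolding eventually_sequentially by blast
    qed auto
    thus "\<exists>x. limitin mtopology \<sigma> x sequentially" by blast
  qed
  show ?thesis using top comp by simp
qed



lemma map_upt_eq: "map x [0..<n] = map y [0..<n] \<longleftrightarrow> (\<forall>i<n. x i = y i)"
  by (auto simp: list_eq_iff_nth_eq)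

lemma Phi_even: "Phi f x (2*i) = x i" unfolding Phi_def by simp
lemma Phi_odd: "Phi f x (Suc (2*i)) = f i (map x [0..<Suc i])" unfolding Phi_def by simp

lemma Phi_inj: "Phi f x = Phi f y \<Longrightarrow> x = y"
  by (metis Phi_even ext)

lemma Phi_agree: "(\<forall>i<N. x i = y i) \<Longrightarrow> m < N \<Longrightarrow> Phi f x m = Phi f y m"
proof -
  assume a: "\<forall>i<N. x i = y i" "m < N"
  have "\<forall>i<Suc (m div 2). x i = y i" using a by auto
  hence e1: "map x [0..<Suc (m div 2)] = map y [0..<Suc (m div 2)]" by (simp only: map_upt_eq)
  have e2: "x (m div 2) = y (m div 2)" using a by auto
  show ?thesis unfolding Phi_def by (simp only: e1 e2)
qed

locale setting2 = setting k Q S R for k Q S and R :: "nat \<Rightarrow> 'w \<Rightarrow> 'w \<Rightarrow> real" +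
  fixes f :: "nat \<Rightarrow> 'w list \<Rightarrow> 'w"
  assumes f_inj: "\<And>n. inj_on (f n) {xs. length xs = Suc n}"
begin

abbreviation "LTd \<equiv> Lam_tilde k Q f R"

lemma LT_metric: "Metric_space UNIV LTd"
proof
  fix x y z :: "nat \<Rightarrow> 'w"
  show "0 \<le> LTd x y" unfolding Lam_tilde_def by (rule Lam_nonneg)
  show "LTd x y = LTd y x" unfolding Lam_tilde_def by (rule Lam_sym)
  show "LTd x y = 0 \<longleftrightarrow> x = y" unfolding Lam_tilde_def using Lam_zero Lam_same Phi_inj by metis
  show "LTd x z \<le> LTd x y + LTd y z" unfolding Lam_tilde_def by (rule Lam_tri)
qed

lemma Lam_close:
  assumes "\<forall>m<N. X m = Y m"
  shows "Lam k Q R X Y \<le> (\<Sum>i. 2 * lam k (i + N))"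
proof -
  have s: "summable (\<lambda>m. D m (X m) (Y m))" using Lam_sums by (rule sums_summable)
  have "Lam k Q R X Y = (\<Sum>i. D (i+N) (X (i+N)) (Y (i+N))) + (\<Sum>m<N. D m (X m) (Y m))"
    using suminf_split_initial_segment[OF s, of N] Lam_sums[of X Y] by (simp add: sums_iff)
  also have "(\<Sum>m<N. D m (X m) (Y m)) = 0" using assms by (simp add: Aset_same)
  also have "(\<Sum>i. D (i+N) (X (i+N)) (Y (i+N))) \<le> (\<Sum>i. 2 * lam k (i + N))"
  proof (rule suminf_le)
    show "summable (\<lambda>i. D (i+N) (X (i+N)) (Y (i+N)))" using s by (rule summable_ignore_initial_segment)
    show "summable (\<lambda>i. 2 * lam k (i + N))"
      by (intro summable_mult summable_ignore_initial_segment lam_summable)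
  qed (rule D_upper2)
  finally show ?thesis by simp
qed

lemma LT_close: "e > 0 \<Longrightarrow> \<exists>N. \<forall>x y. (\<forall>i<N. x i = y i) \<longrightarrow> LTd x y < e"
proof -
  assume "e > 0"
  have "summable (\<lambda>i. 2 * lam k i)" by (intro summable_mult lam_summable)
  then obtain N where N: "\<And>n. n \<ge> N \<Longrightarrow> norm (\<Sum>i. 2 * lam k (i + n)) < e"
    using suminf_exist_split[OF \<open>e > 0\<close>] by blast
  have "LTd x y < e" if "\<forall>i<N. x i = y i" for x y
  proof -
    have "\<forall>m<N. Phi f x m = Phi f y m" using Phi_agree that by blast
    hence "LTd x y \<le> (\<Sum>i. 2 * lam k (i + N))" unfolding Lam_tilde_def by (rule Lam_close)
    thus ?thesis using N[of N] by simp
  qed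
  thus ?thesis by blast
qed

lemma LT_sep: "\<exists>r>0. \<forall>x y. LTd x y < r \<longrightarrow> (\<forall>i<N. x i = y i)"
proof (intro exI conjI allI impI)
  show "0 < lam k (mu Q (2*N))" by (rule lam_pos)
  fix x y i assume a: "LTd x y < lam k (mu Q (2*N))" "i < N"
  show "x i = y i"
  proof (rule ccontr)
    assume "x i \<noteq> y i"
    hence "Phi f x (2*i) \<noteq> Phi f y (2*i)" by (simp add: Phi_even)
    hence "lam k (mu Q (2*i)) \<le> LTd x y" unfolding Lam_tilde_def by (rule Lam_ge)
    moreover have "lam k (mu Q (2*N)) \<le> lam k (mu Q (2*i))"
      using a(2) by (intro lam_antimono mu_mono) simp
    ultimately show False using a(1) by linarith
  qed
qed

lemma LT_rigid: "strongly_rigid LTd"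
  unfolding strongly_rigid_def
proof (intro allI impI)
  fix x y u v assume a: "LTd x y = LTd u v \<and> LTd x y \<noteq> 0"
  let ?X = "Phi f x" and ?Y = "Phi f y" and ?U = "Phi f u" and ?V = "Phi f v"
  have Req: "R m (?X m) (?Y m) = R m (?U m) (?V m)" for m
    using a unfolding Lam_tilde_def by (intro Lam_rigid) simp
  have "x \<noteq> y"
  proof
    assume "x = y"
    hence "LTd x y = 0" unfolding Lam_tilde_def by (simp add: Lam_same)
    with a show False by simp
  qed
  then obtain n0 where n0: "x n0 \<noteq> y n0" by auto
  define L where "L z n = map z [0..<Suc n]" for z :: "nat \<Rightarrow> 'w" and n
  have restr: "a i = b i" if "L a n = L b n" "i \<le> n" for a b :: "nat \<Rightarrow> 'w" and n i
  proof -
    have "\<forall>i<Suc n. a i = b i" using that(1) unfolding L_def by (simp only: map_upt_eq)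
    thus ?thesis using that(2) by simp
  qed
  have case_n: "(L x n = L u n \<and> L y n = L v n) \<or> (L x n = L v n \<and> L y n = L u n)"
    if "n0 \<le> n" for n
  proof -
    have injn: "L a n = L b n" if "f n (L a n) = f n (L b n)" for a b
    proof -
      have "L a n \<in> {xs. length xs = Suc n}" "L b n \<in> {xs. length xs = Suc n}" by (simp_all add: L_def)
      thus ?thesis using inj_onD[OF f_inj[of n] that] by blast
    qed
    have "L x n \<noteq> L y n" using restr[of x n y n0] n0 that by blast
    hence "f n (L x n) \<noteq> f n (L y n)" using injn by blast
    hence ne: "?X (Suc (2*n)) \<noteq> ?Y (Suc (2*n))" by (simp only: Phi_odd L_def not_False_eq_True)
    hence "R (Suc (2*n)) (?X (Suc (2*n))) (?Y (Suc (2*n))) \<noteq> 0" using Rzero by blast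
    hence "{?X (Suc (2*n)), ?Y (Suc (2*n))} = {?U (Suc (2*n)), ?V (Suc (2*n))}"
      using Rrig[of "Suc (2*n)"] Req[of "Suc (2*n)"] unfolding strongly_rigid_def by blast
    hence "(?X (Suc (2*n)) = ?U (Suc (2*n)) \<and> ?Y (Suc (2*n)) = ?V (Suc (2*n))) \<or>
           (?X (Suc (2*n)) = ?V (Suc (2*n)) \<and> ?Y (Suc (2*n)) = ?U (Suc (2*n)))"
      by (simp only: doubleton_eq_iff)
    hence "(f n (L x n) = f n (L u n) \<and> f n (L y n) = f n (L v n)) \<or>
           (f n (L x n) = f n (L v n) \<and> f n (L y n) = f n (L u n))"
      by (simp only: Phi_odd L_def not_False_eq_True)
    thus ?thesis using injn by blast
  qed
  have final: "p = x \<and> q = y"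
    if pq: "L x n0 = L p n0 \<and> L y n0 = L q n0" and alt: "\<And>n. n0 \<le> n \<Longrightarrow>
       (L x n = L p n \<and> L y n = L q n) \<or> (L x n = L q n \<and> L y n = L p n)" for p q
  proof -
    have same: "L x n = L p n \<and> L y n = L q n" if "n0 \<le> n" for n
    proof (rule ccontr)
      assume "\<not> (L x n = L p n \<and> L y n = L q n)"
      hence h: "L x n = L q n" "L y n = L p n" using alt that by blast+
      have "x n0 = q n0" using restr[OF h(1) that] .
      moreover have "y n0 = p n0" using restr[OF h(2) that] .
      moreover have "x n0 = p n0" using restr[of x n0 p n0] pq by simp
      moreover have "y n0 = q n0" using restr[of y n0 q n0] pq by simp
      ultimately show False using n0 by simp
    qed
    show ?thesis
    proof (intro conjI ext)
      fix i
      have s: "L x (max i n0) = L p (max i n0)" "L y (max i n0) = L q (max i n0)" using same[of "max i n0"] by auto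
      show "p i = x i" using restr[OF s(1), of i] by simp
      show "q i = y i" using restr[OF s(2), of i] by simp
    qed
  qed
  show "{x, y} = {u, v}"
  proof (cases "L x n0 = L u n0 \<and> L y n0 = L v n0")
    case True
    hence "u = x \<and> v = y" using final[of u v] case_n by blast
    thus ?thesis by simp
  next
    case False
    hence F: "L x n0 = L v n0 \<and> L y n0 = L u n0" using case_n[of n0] by blast
    have "v = x \<and> u = y" by (rule final[of v u]) (use F case_n in blast)+
    thus ?thesis by auto
  qed
qed

lemma main:
  "LTd \<in> Met (baire_top :: (nat \<Rightarrow> 'w) topology)
   \<and> (\<forall>x y. LTd x y \<le> 2 * (1/2) ^ F k 0)
   \<and> Metric_space.mcomplete (UNIV :: (nat \<Rightarrow> 'w) set) LTd
   \<and> strongly_rigid LTd"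
proof -
  have mb: "Metric_space.mtopology UNIV LTd = (baire_top :: (nat \<Rightarrow> 'w) topology) \<and> Metric_space.mcomplete UNIV LTd"
    by (rule metric_baire[OF LT_metric LT_close LT_sep])
  have tsp: "topspace (baire_top :: (nat \<Rightarrow> 'w) topology) = UNIV"
    unfolding baire_top_def by (simp add: PiE_UNIV_domain)
  show ?thesis
    using mb LT_metric LT_rigid Lam_bound unfolding Met_def tsp Lam_tilde_def by simp
qed

end

theorem theorem4p20:
  fixes k :: nat and S :: "real set" and Q :: "nat \<Rightarrow> rat"
    and R :: "nat \<Rightarrow> 'w \<Rightarrow> 'w \<Rightarrow> real" and f :: "nat \<Rightarrow> 'w list \<Rightarrow> 'w"
  assumes Omega_card: "(UNIV :: 'w set) \<approx> (UNIV :: real set)"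
    and Q: "admissible_Q Q"
    and f_inj: "\<And>n. inj_on (f n) {xs. length xs = Suc n}"
    and S: "ubiq_dense S"
    and R: "gauge_system S R"
  shows "Lam_tilde k Q f R \<in> Met (baire_top :: (nat \<Rightarrow> 'w) topology)
         \<and> (\<forall>x y. Lam_tilde k Q f R x y \<le> 2 * (1/2) ^ F k 0)
         \<and> Metric_space.mcomplete (UNIV :: (nat \<Rightarrow> 'w) set) (Lam_tilde k Q f R)
         \<and> strongly_rigid (Lam_tilde k Q f R)"
proof -
  interpret setting2 k Q S R f
    by unfold_locales (use Q R f_inj in auto)
  show ?thesis by (rule main)
qed

end
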